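(* Let $G$ be an $n$-vertex connected graph with chromatic number $\chi \geq 2$, and suppose that $\chi$ divides $n$. Then ${\rm ABC}(G) \leq {\rm ABC}(T_{n,\chi})$, with equality if and only if $G \cong T_{n,\chi}$.
   Context: All graphs are simple and undirected. For a graph $G$ and a vertex $v$, $d(v)$ denotes the degree of $v$. The atom-bond connectivity (ABC) index is ${\rm ABC}(G)=\sum_{uv\in E(G)} \sqrt{\frac{d(u)+d(v)-2}{d(u)d(v)}}$. $T_{n,l}$ denotes the complete $l$-partite graph on $n$ vertices whose part sizes $t_1,\dots,t_l$ satisfy $|t_i - t_j| \leq 1$ for all $i,j$. *)

theory Defs
  imports Complex_Main
begin

definition simple_graph :: "'a set \<Rightarrow> ('a \<Rightarrow> 'a \<Rightarrow> bool) \<Rightarrow> bool" where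
  "simple_graph V E \<longleftrightarrow> finite V \<and> (\<forall>u v. E u v \<longrightarrow> E v u) \<and> (\<forall>v. \<not> E v v)
     \<and> (\<forall>u v. E u v \<longrightarrow> u \<in> V \<and> v \<in> V)"

definition edges :: "'a set \<Rightarrow> ('a \<Rightarrow> 'a \<Rightarrow> bool) \<Rightarrow> 'a set set" where
  "edges V E = {{u, v} | u v. u \<in> V \<and> v \<in> V \<and> E u v}"

definition deg :: "'a set \<Rightarrow> ('a \<Rightarrow> 'a \<Rightarrow> bool) \<Rightarrow> 'a \<Rightarrow> nat" where
  "deg V E v = card {u \<in> V. E v u}"

definition ABC :: "'a set \<Rightarrow> ('a \<Rightarrow> 'a \<Rightarrow> bool) \<Rightarrow> real" where
  "ABC V E = (\<Sum>e\<in>edges V E.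
      sqrt ((real (\<Sum>v\<in>e. deg V E v) - 2) / real (\<Prod>v\<in>e. deg V E v)))"

definition connected_graph :: "'a set \<Rightarrow> ('a \<Rightarrow> 'a \<Rightarrow> bool) \<Rightarrow> bool" where
  "connected_graph V E \<longleftrightarrow> V \<noteq> {} \<and>
     (\<forall>u\<in>V. \<forall>v\<in>V. (\<lambda>x y. x \<in> V \<and> y \<in> V \<and> E x y)\<^sup>*\<^sup>* u v)"

definition colorable :: "'a set \<Rightarrow> ('a \<Rightarrow> 'a \<Rightarrow> bool) \<Rightarrow> nat \<Rightarrow> bool" where
  "colorable V E k \<longleftrightarrow> (\<exists>c :: 'a \<Rightarrow> nat. (\<forall>v\<in>V. c v < k) \<and>
     (\<forall>u\<in>V. \<forall>v\<in>V. E u v \<longrightarrow> c u \<noteq> c v))"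

definition chromatic_number :: "'a set \<Rightarrow> ('a \<Rightarrow> 'a \<Rightarrow> bool) \<Rightarrow> nat" where
  "chromatic_number V E = (LEAST k. colorable V E k)"

definition graph_iso :: "'a set \<Rightarrow> ('a \<Rightarrow> 'a \<Rightarrow> bool) \<Rightarrow> 'b set \<Rightarrow> ('b \<Rightarrow> 'b \<Rightarrow> bool) \<Rightarrow> bool" where
  "graph_iso V E V' E' \<longleftrightarrow> (\<exists>f. bij_betw f V V' \<and>
     (\<forall>u\<in>V. \<forall>v\<in>V. E u v \<longleftrightarrow> E' (f u) (f v)))"

text \<open>Turan graph T_{n,l}: vertices {0..<n}, parts are residue classes mod l
(sizes differ by at most 1), edges between vertices in different parts.\<close>
definition turan_V :: "nat \<Rightarrow> nat set" where
  "turan_V n = {0..<n}"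

definition turan_E :: "nat \<Rightarrow> nat \<Rightarrow> nat \<Rightarrow> nat \<Rightarrow> bool" where
  "turan_E n l i j \<longleftrightarrow> i < n \<and> j < n \<and> i mod l \<noteq> j mod l"

end

theory Submission
  imports Defs "HOL-Analysis.Convex"
begin



lemma R1:
  fixes a b :: real
  assumes a: "a \<ge> 1" and b: "b \<ge> 1"
  shows "sqrt ((a+b-2)/(a*b)) - sqrt (((a+1)+b-2)/((a+1)*b)) \<le> 1/sqrt a - 1/sqrt (a+1)"
proof -
  define s where "s = (b-2)/b"
  define A where "A = (a+b-2)/(a*b)"
  define B where "B = ((a+1)+b-2)/((a+1)*b)"
  have b0: "b \<noteq> 0" "a \<noteq> 0" "a+1 \<noteq> 0" using a b by auto
  have As: "A = 1/b + s/a" using b0 unfolding A_def s_def by (simp add: field_simps)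
  have Bs: "B = 1/b + s/(a+1)"
  proof -
    have 1: "1/b = (a+1)/((a+1)*b)" using b0 by simp
    have 2: "((b-2)/b)/(a+1) = (b-2)/((a+1)*b)" by (simp add: mult.commute)
    have 3: "1/b + s/(a+1) = ((a+1)+(b-2))/((a+1)*b)" unfolding s_def 1 2 by (simp only: add_divide_distrib)
    have "(a+1)+b-2 = (a+1)+(b-2)" by simp
    then show ?thesis unfolding B_def using 3 by simp
  qed
  have ab: "1/sqrt (a+1) \<le> 1/sqrt a" using a
    by (simp add: frac_le real_sqrt_le_mono)
  show ?thesis
  proof (cases "b \<le> 2")
    case True
    then have "s \<le> 0" using b unfolding s_def by (simp add: divide_nonpos_pos)
    moreover have "1/(a+1) \<le> 1/a" using a by (simp add: frac_le)
    ultimately have "s/a \<le> s/(a+1)" using a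
      by (metis divide_inverse inverse_eq_divide mult_left_mono_neg)
    then have "A \<le> B" using As Bs by simp
    then have "sqrt A \<le> sqrt B" by (rule real_sqrt_le_mono)
    then show ?thesis using ab unfolding A_def B_def by linarith
  next
    case False
    then have s0: "0 < s" and s1: "s \<le> 1" using b unfolding s_def by (auto simp: field_simps)
    define al where "al = 1/sqrt a"
    define be where "be = 1/sqrt (a+1)"
    have al2: "al^2 = 1/a" using a unfolding al_def by (simp add: power_divide)
    have be2: "be^2 = 1/(a+1)" using a unfolding be_def by (simp add: power_divide)
    have alpos: "al > 0" "be > 0" using a unfolding al_def be_def by auto
    define X where "X = sqrt A"
    define Y where "Y = sqrt B"
    have "(s*al)^2 \<le> A"
    proof -
      have "(s*al)^2 = s^2/a" using al2 by (simp add: power_mult_distrib)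
      also have "\<dots> \<le> s/a" using s0 s1 a by (intro divide_right_mono) (auto simp: power2_eq_square mult_le_cancel_right1)
      also have "\<dots> \<le> A" using As b by simp
      finally show ?thesis .
    qed
    then have X1: "s*al \<le> X" unfolding X_def using s0 alpos by (simp add: real_le_rsqrt)
    have "(s*be)^2 \<le> B"
    proof -
      have "(s*be)^2 = s^2/(a+1)" using be2 by (simp add: power_mult_distrib)
      also have "\<dots> \<le> s/(a+1)" using s0 s1 a by (intro divide_right_mono) (auto simp: power2_eq_square mult_le_cancel_right1)
      also have "\<dots> \<le> B" using Bs b by simp
      finally show ?thesis .
    qed
    then have Y1: "s*be \<le> Y" unfolding Y_def using s0 alpos by (simp add: real_le_rsqrt)
    have A0: "A \<ge> 0" "B \<ge> 0" using As Bs s0 a b by auto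
    have "X^2 - Y^2 = A - B" unfolding X_def Y_def using A0 by simp
    also have "\<dots> = s*(al^2 - be^2)" using As Bs al2 be2 by (simp add: algebra_simps)
    finally have XY: "(X - Y)*(X + Y) = s*(al - be)*(al + be)"
      by (simp add: power2_eq_square algebra_simps)
    show ?thesis
    proof (cases "X \<le> Y")
      case True then show ?thesis using ab unfolding X_def Y_def A_def B_def by linarith
    next
      case False
      have "(X - Y) * (s*(al+be)) \<le> (X - Y)*(X+Y)"
        using False X1 Y1 by (intro mult_left_mono) (auto simp: algebra_simps)
      also have "\<dots> = (al - be) * (s*(al+be))" using XY by simp
      finally have "X - Y \<le> al - be"
        using s0 alpos by (simp add: mult_le_cancel_right)
      then show ?thesis unfolding X_def Y_def A_def B_def al_def be_def by simp
    qed
  qed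
qed

lemma R2:
  fixes a :: real
  assumes a: "a \<ge> 1"
  shows "a * (1/sqrt a - 1/sqrt (a+1)) < 1/(2*sqrt (a+1))"
proof -
  define al where "al = 1/sqrt a"
  define be where "be = 1/sqrt (a+1)"
  have al2: "al^2 = 1/a" using a unfolding al_def by (simp add: power_divide)
  have be2: "be^2 = 1/(a+1)" using a unfolding be_def by (simp add: power_divide)
  have pos: "al > 0" "be > 0" using a unfolding al_def be_def by auto
  have lt: "be < al" using a unfolding al_def be_def by (simp add: frac_less2)
  have "a * (al - be) * (al + be) = a * (al^2 - be^2)" by (simp add: power2_eq_square algebra_simps)
  also have "\<dots> = be^2" using al2 be2 a by (simp add: field_simps)
  finally have e: "a * (al - be) * (al + be) = be^2" .
  have "a*(al - be) * (al+be) < be/2 * (al + be)"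
    using e pos lt by (simp add: power2_eq_square algebra_simps)
  moreover have "0 \<le> al + be" using pos by simp
  ultimately have "a*(al-be) < be/2" by (rule mult_right_less_imp_less)
  then show ?thesis unfolding al_def be_def by simp
qed

lemma R3_aux: fixes x y :: real assumes "x \<noteq> 0" "y \<noteq> 0"
  shows "1/x + 1/y - 2*((1/x)*(1/y)) = (x+y-2)/(x*y)"
  using assms by (simp add: field_simps)

lemma R3:
  fixes a b :: real
  assumes a: "a \<ge> 1" and b: "b \<ge> 1"
  shows "1/(2*sqrt (a+1)) + 1/(2*sqrt (b+1)) \<le> sqrt (((a+1)+(b+1)-2)/((a+1)*(b+1)))"
proof -
  define p where "p = 1/sqrt (a+1)"
  define q where "q = 1/sqrt (b+1)"
  have p2: "p^2 = 1/(a+1)" using a unfolding p_def by (simp add: power_divide)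
  have q2: "q^2 = 1/(b+1)" using b unfolding q_def by (simp add: power_divide)
  have pos: "p > 0" "q > 0" using a b unfolding p_def q_def by auto
  have pq: "p^2 \<le> 1/2" "q^2 \<le> 1/2" unfolding p2 q2 using a b by (auto intro!: divide_left_mono)
  have "p*q \<le> 1/2"
  proof -
    have "0 \<le> (p-q)^2" by simp
    then have "0 \<le> p^2 - 2*(p*q) + q^2" by (simp add: power2_diff)
    then show ?thesis using pq by linarith
  qed
  have key: "((p+q)/2)^2 \<le> p^2 + q^2 - 2*(p^2*q^2)"
  proof -
    have h: "0 \<le> 3*(p-q)^2 + 4*(p*q)*(1 - 2*(p*q))"
      using pos \<open>p*q \<le> 1/2\<close> by (intro add_nonneg_nonneg mult_nonneg_nonneg) auto
    have e1: "((p+q)/2)^2 = p^2/4+q^2/4+(p*q)/2" by (simp add: power2_eq_square field_simps)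
    have e2: "3*(p-q)^2 + 4*(p*q)*(1 - 2*(p*q)) = 3*p^2+3*q^2 - 2*(p*q) - 8*(p^2*q^2)"
      by (simp add: power2_eq_square algebra_simps)
    show ?thesis using h unfolding e1 e2 by linarith
  qed
  have e: "p^2 + q^2 - 2*(p^2*q^2) = ((a+1)+(b+1)-2)/((a+1)*(b+1))"
  proof -
    have "a*b \<ge> 0" using a b by simp
    then have d: "1 + (a + (b + a * b)) \<noteq> 0" using a b by linarith
    show ?thesis unfolding p2 q2 power_mult_distrib using a b by (intro R3_aux) auto
  qed
  have "(p+q)/2 \<le> sqrt (p^2 + q^2 - 2*(p^2*q^2))"
    using key by (rule real_le_rsqrt)
  then have "(p+q)/2 \<le> sqrt (((a+1)+(b+1)-2)/((a+1)*(b+1)))" by (simp only: e)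
  moreover have "(p+q)/2 = 1/(2*sqrt (a+1)) + 1/(2*sqrt (b+1))" unfolding p_def q_def by simp
  ultimately show ?thesis by simp
qed



definition hh :: "nat \<Rightarrow> nat \<Rightarrow> real" where
  "hh a b = sqrt ((real a + real b - 2)/(real a * real b))"

definition FF :: "'a set \<Rightarrow> ('a \<Rightarrow> 'a \<Rightarrow> bool) \<Rightarrow> real" where
  "FF V E = (\<Sum>x\<in>V. \<Sum>y\<in>V. if E x y then hh (deg V E x) (deg V E y) else 0)"

lemma hh_comm: "hh a b = hh b a"
  unfolding hh_def by (simp add: add.commute mult.commute)

lemma ABC_FF:
  assumes sg: "simple_graph V E"
  shows "ABC V E = FF V E / 2"
proof -
  have fin: "finite V" and sym: "\<And>u v. E u v \<Longrightarrow> E v u" and irr: "\<And>v. \<not> E v v"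
    and inV: "\<And>u v. E u v \<Longrightarrow> u \<in> V \<and> v \<in> V"
    using sg unfolding simple_graph_def by auto
  define g where "g p = hh (deg V E (fst p)) (deg V E (snd p))" for p
  define S where "S = {p \<in> V \<times> V. E (fst p) (snd p)}"
  define gm :: "'a \<times> 'a \<Rightarrow> 'a set" where "gm p = {fst p, snd p}" for p
  have finS: "finite S" unfolding S_def using fin by simp
  have "FF V E = (\<Sum>p\<in>V\<times>V. if E (fst p) (snd p) then g p else 0)"
    unfolding FF_def g_def by (simp add: sum.cartesian_product case_prod_beta)
  also have "\<dots> = sum g S" unfolding S_def using fin by (simp add: sum.inter_filter)
  also have "\<dots> = (\<Sum>e\<in>gm ` S. sum g {p \<in> S. gm p = e})" by (rule sum.image_gen[OF finS])
  also have "gm ` S = edges V E"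
    unfolding gm_def S_def edges_def by (auto simp: image_def)
  finally have F: "FF V E = (\<Sum>e\<in>edges V E. sum g {p \<in> S. gm p = e})" .
  have "ABC V E = (\<Sum>e\<in>edges V E. sum g {p \<in> S. gm p = e} / 2)"
    unfolding ABC_def
  proof (rule sum.cong[OF refl])
    fix e assume "e \<in> edges V E"
    then obtain u v where e: "e = {u, v}" and uv: "u \<in> V" "v \<in> V" "E u v"
      unfolding edges_def by auto
    have neq: "u \<noteq> v" using uv irr by auto
    have fib: "{p \<in> S. gm p = e} = {(u,v), (v,u)}"
      using uv sym neq unfolding S_def gm_def e by (auto simp: doubleton_eq_iff)
    have "sum g {p \<in> S. gm p = e} = 2 * hh (deg V E u) (deg V E v)"
      unfolding fib using neq by (simp add: g_def hh_comm[of "deg V E v"])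
    moreover have "sqrt ((real (\<Sum>v\<in>e. deg V E v) - 2) / real (\<Prod>v\<in>e. deg V E v))
        = hh (deg V E u) (deg V E v)"
      unfolding e hh_def using neq by simp
    ultimately show "sqrt ((real (\<Sum>v\<in>e. deg V E v) - 2) / real (\<Prod>v\<in>e. deg V E v))
        = sum g {p \<in> S. gm p = e} / 2" by simp
  qed
  also have "\<dots> = FF V E / 2" unfolding F by (simp add: sum_divide_distrib)
  finally show ?thesis .
qed

lemma decomp:
  fixes T :: "'a \<Rightarrow> 'a \<Rightarrow> real"
  assumes fin: "finite V" and uv: "u \<in> V" "v \<in> V" "u \<noteq> v"
    and sym: "\<And>x y. T x y = T y x" and d0: "T u u = 0" "T v v = 0"
  shows "(\<Sum>x\<in>V. \<Sum>y\<in>V. T x y) = 2*T u v + 2*(\<Sum>y\<in>V-{u,v}. T u y)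
     + 2*(\<Sum>y\<in>V-{u,v}. T v y) + (\<Sum>x\<in>V-{u,v}. \<Sum>y\<in>V-{u,v}. T x y)"
proof -
  define W where "W = V - {u,v}"
  have V: "V = insert u (insert v W)" using uv unfolding W_def by auto
  have fW: "finite W" using fin unfolding W_def by simp
  have nu: "u \<notin> insert v W" and nv: "v \<notin> W" using uv unfolding W_def by auto
  have row: "(\<Sum>y\<in>V. T x y) = T x u + T x v + (\<Sum>y\<in>W. T x y)" for x
    unfolding V using fW nu nv by (simp add: add.assoc)
  have "(\<Sum>x\<in>V. \<Sum>y\<in>V. T x y) = (\<Sum>x\<in>V. T x u + T x v + (\<Sum>y\<in>W. T x y))"
    by (simp add: row)
  also have "\<dots> = (T u u + T u v + (\<Sum>y\<in>W. T u y)) + (T v u + T v v + (\<Sum>y\<in>W. T v y))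
      + (\<Sum>x\<in>W. T x u + T x v + (\<Sum>y\<in>W. T x y))"
    unfolding V using fW nu nv by (simp add: add.assoc)
  also have "(\<Sum>x\<in>W. T x u + T x v + (\<Sum>y\<in>W. T x y))
      = (\<Sum>x\<in>W. T u x) + (\<Sum>x\<in>W. T v x) + (\<Sum>x\<in>W. \<Sum>y\<in>W. T x y)"
    by (simp add: sum.distrib sym[of _ u] sym[of _ v])
  finally show ?thesis unfolding W_def using d0 sym[of v u] by simp
qed




lemma R_comb:
  fixes a b su sv :: real
  assumes a: "a \<ge> 1" and b: "b \<ge> 1"
    and su: "su \<le> a * (1/sqrt a - 1/sqrt (a+1))" and sv: "sv \<le> b * (1/sqrt b - 1/sqrt (b+1))"
  shows "su + sv < sqrt (((a+1)+(b+1)-2)/((a+1)*(b+1)))"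
  using R2[OF a] R2[OF b] R3[OF a b] su sv by linarith

lemma L_nonneg: "(a::real) \<ge> 1 \<Longrightarrow> 0 \<le> 1/sqrt a - 1/sqrt (a+1)"
  by (simp add: frac_le real_sqrt_le_mono)

lemma add_edge:
  assumes sg: "simple_graph V E" and uv: "u \<in> V" "v \<in> V" "u \<noteq> v" "\<not> E u v"
    and du: "deg V E u \<ge> 1" and dv: "deg V E v \<ge> 1"
    and E': "E' = (\<lambda>x y. E x y \<or> (x = u \<and> y = v) \<or> (x = v \<and> y = u))"
  shows "simple_graph V E'" and "FF V E < FF V E'"
proof -
  have fin: "finite V" and sym: "\<And>x y. E x y \<Longrightarrow> E y x" and irr: "\<And>x. \<not> E x x"
    and inV: "\<And>x y. E x y \<Longrightarrow> x \<in> V \<and> y \<in> V"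
    using sg unfolding simple_graph_def by auto
  show "simple_graph V E'" using sg uv unfolding simple_graph_def E' by auto
  define d where "d = deg V E"
  define d' where "d' = deg V E'"
  have d'u: "d' u = d u + 1"
  proof -
    have "{w \<in> V. E' u w} = insert v {w \<in> V. E u w}" using uv unfolding E' by auto
    moreover have "v \<notin> {w \<in> V. E u w}" using uv by auto
    ultimately show ?thesis unfolding d'_def d_def deg_def using fin by simp
  qed
  have d'v: "d' v = d v + 1"
  proof -
    have "{w \<in> V. E' v w} = insert u {w \<in> V. E v w}" using uv unfolding E' by auto
    moreover have "u \<notin> {w \<in> V. E v w}" using uv sym by auto
    ultimately show ?thesis unfolding d'_def d_def deg_def using fin by simp
  qed
  have d'x: "d' x = d x" if "x \<noteq> u" "x \<noteq> v" for x
  proof -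
    have "{w \<in> V. E' x w} = {w \<in> V. E x w}" using that unfolding E' by auto
    then show ?thesis unfolding d'_def d_def deg_def by simp
  qed
  define T where "T x y = (if E x y then hh (d x) (d y) else 0)" for x y
  define T' where "T' x y = (if E' x y then hh (d' x) (d' y) else 0)" for x y
  have symE': "\<And>x y. E' x y \<Longrightarrow> E' y x" and irrE': "\<And>x. \<not> E' x x"
    using sym irr uv unfolding E' by auto
  have TS: "T x y = T y x" for x y unfolding T_def using sym by (auto simp: hh_comm)
  have TS': "T' x y = T' y x" for x y unfolding T'_def using symE' by (auto simp: hh_comm)
  define W where "W = V - {u,v}"
  have FE: "FF V E = 2*T u v + 2*(\<Sum>y\<in>W. T u y) + 2*(\<Sum>y\<in>W. T v y) + (\<Sum>x\<in>W. \<Sum>y\<in>W. T x y)"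
    unfolding FF_def W_def T_def[symmetric] d_def[symmetric]
    by (rule decomp[OF fin uv(1-3)]) (use TS irr in \<open>auto simp: T_def\<close>)
  have FE': "FF V E' = 2*T' u v + 2*(\<Sum>y\<in>W. T' u y) + 2*(\<Sum>y\<in>W. T' v y) + (\<Sum>x\<in>W. \<Sum>y\<in>W. T' x y)"
    unfolding FF_def W_def T'_def[symmetric] d'_def[symmetric]
    by (rule decomp[OF fin uv(1-3)]) (use TS' irrE' in \<open>auto simp: T'_def\<close>)
  have WW: "(\<Sum>x\<in>W. \<Sum>y\<in>W. T' x y) = (\<Sum>x\<in>W. \<Sum>y\<in>W. T x y)"
    unfolding T_def T'_def W_def E' by (intro sum.cong refl) (auto simp: d'x)
  have Tuv: "T u v = 0" unfolding T_def using uv by simp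
  have T'uv: "T' u v = hh (d u + 1) (d v + 1)" unfolding T'_def E' using d'u d'v by simp
  define L where "L a = 1/sqrt a - 1/sqrt (a+1)" for a :: real
  have rowbound: "(\<Sum>y\<in>W. T z y - T' z y) \<le> real (d z) * L (real (d z))"
    if z: "z = u \<or> z = v" and dz1: "d z \<ge> 1" and d'z: "d' z = d z + 1" for z
  proof -
    have zV: "z \<in> V" using z uv by auto
    have "(\<Sum>y\<in>W. T z y - T' z y) \<le> (\<Sum>y\<in>W. if E z y then L (real (d z)) else 0)"
    proof (rule sum_mono)
      fix y assume y: "y \<in> W"
      then have yn: "y \<noteq> u" "y \<noteq> v" unfolding W_def by auto
      show "T z y - T' z y \<le> (if E z y then L (real (d z)) else 0)"
      proof (cases "E z y")
        case True
        have "d y \<ge> 1"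
        proof -
          have "z \<in> {w \<in> V. E y w}" using True sym zV by auto
          then have "{w \<in> V. E y w} \<noteq> {}" by auto
          then show ?thesis unfolding d_def deg_def using fin by (simp add: Suc_le_eq card_gt_0_iff)
        qed
        have "T z y - T' z y = hh (d z) (d y) - hh (d z + 1) (d y)"
          unfolding T_def T'_def E' using True d'z d'x[OF yn] by simp
        also have "\<dots> \<le> L (real (d z))"
          using R1[of "real (d z)" "real (d y)"] dz1 \<open>d y \<ge> 1\<close> unfolding hh_def L_def
          by (simp add: add.commute add.left_commute)
        finally show ?thesis using True by simp
      next
        case False
        then have "\<not> E' z y" using yn unfolding E' by auto
        then show ?thesis using False unfolding T_def T'_def by simp
      qed
    qed
    also have "\<dots> = real (card {y \<in> W. E z y}) * L (real (d z))"
    proof -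
      have "finite W" using fin unfolding W_def by simp
      then have "(\<Sum>y\<in>{y \<in> W. E z y}. L (real (d z))) = (\<Sum>y\<in>W. if E z y then L (real (d z)) else 0)"
        by (rule sum.inter_filter)
      then show ?thesis by simp
    qed
    also have "\<dots> \<le> real (d z) * L (real (d z))"
    proof (rule mult_right_mono)
      have "{y \<in> W. E z y} \<subseteq> {w \<in> V. E z w}" unfolding W_def by auto
      then have "card {y \<in> W. E z y} \<le> d z" unfolding d_def deg_def using fin by (simp add: card_mono)
      then show "real (card {y \<in> W. E z y}) \<le> real (d z)" by simp
      show "0 \<le> L (real (d z))" unfolding L_def using dz1 by (intro L_nonneg) simp
    qed
    finally show ?thesis .
  qed
  have bu: "(\<Sum>y\<in>W. T u y - T' u y) \<le> real (d u) * L (real (d u))"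
    using rowbound[of u] du d'u unfolding d_def by simp
  have bv: "(\<Sum>y\<in>W. T v y - T' v y) \<le> real (d v) * L (real (d v))"
    using rowbound[of v] dv d'v unfolding d_def by simp
  have "(\<Sum>y\<in>W. T u y - T' u y) + (\<Sum>y\<in>W. T v y - T' v y) < hh (d u + 1) (d v + 1)"
    using R_comb[of "real (d u)" "real (d v)", OF _ _ bu[unfolded L_def] bv[unfolded L_def]] du dv
    unfolding hh_def d_def by (simp add: add.commute add.left_commute)
  then show "FF V E < FF V E'"
    unfolding FE FE' WW Tuv T'uv by (simp add: sum_subtractf)
qed




lemma deg_mono:
  assumes "finite V" "\<And>y. E x y \<Longrightarrow> E' x y"
  shows "deg V E x \<le> deg V E' x"
  unfolding deg_def using assms by (intro card_mono) auto

lemma mono_FF: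
  assumes sgK: "simple_graph V K"
  shows "simple_graph V E \<Longrightarrow> (\<forall>x y. E x y \<longrightarrow> K x y) \<Longrightarrow> (\<forall>x\<in>V. deg V E x \<ge> 1)
     \<Longrightarrow> FF V E \<le> FF V K \<and> (FF V E = FF V K \<longrightarrow> E = K)"
proof (induction "card {p \<in> V\<times>V. K (fst p) (snd p) \<and> \<not> E (fst p) (snd p)}" arbitrary: E rule: less_induct)
  case less
  have fin: "finite V" and symK: "\<And>x y. K x y \<Longrightarrow> K y x" and irrK: "\<And>x. \<not> K x x"
    and inVK: "\<And>x y. K x y \<Longrightarrow> x \<in> V \<and> y \<in> V"
    using sgK unfolding simple_graph_def by auto
  define M where "M E = {p \<in> V\<times>V. K (fst p) (snd p) \<and> \<not> E (fst p) (snd p)}" for E :: "'a \<Rightarrow> 'a \<Rightarrow> bool"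
  show ?case
  proof (cases "M E = {}")
    case True
    have "E = K"
    proof (intro ext iffI)
      fix x y assume "E x y" then show "K x y" using less.prems by auto
    next
      fix x y assume "K x y"
      then have "(x,y) \<in> V \<times> V" using inVK by auto
      then show "E x y" using True \<open>K x y\<close> unfolding M_def by auto
    qed
    then show ?thesis by simp
  next
    case False
    then obtain u v where p: "(u,v) \<in> M E" by auto
    then have uv: "u \<in> V" "v \<in> V" "K u v" "\<not> E u v" unfolding M_def by auto
    have neq: "u \<noteq> v" using uv irrK by auto
    define E' where "E' = (\<lambda>x y. E x y \<or> (x = u \<and> y = v) \<or> (x = v \<and> y = u))"
    have sgE: "simple_graph V E" using less.prems by simp
    have du: "deg V E u \<ge> 1" "deg V E v \<ge> 1" using less.prems uv by auto
    have sgE': "simple_graph V E'" and lt: "FF V E < FF V E'"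
      using add_edge[OF sgE uv(1,2) neq uv(4) du E'_def] by auto
    have sub: "\<forall>x y. E' x y \<longrightarrow> K x y" using less.prems uv symK unfolding E'_def by auto
    have deg': "\<forall>x\<in>V. deg V E' x \<ge> 1"
    proof
      fix x assume "x \<in> V"
      then have "deg V E x \<ge> 1" using less.prems by auto
      moreover have "deg V E x \<le> deg V E' x" using fin by (intro deg_mono) (auto simp: E'_def)
      ultimately show "deg V E' x \<ge> 1" by simp
    qed
    have "M E' \<subset> M E"
    proof
      show "M E' \<subseteq> M E" unfolding M_def E'_def by auto
      have "(u,v) \<notin> M E'" unfolding M_def E'_def by auto
      then show "M E' \<noteq> M E" using p by blast
    qed
    moreover have "finite (M E)" unfolding M_def using fin by simp
    ultimately have "card (M E') < card (M E)" by (rule psubset_card_mono[rotated])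
    then have "FF V E' \<le> FF V K"
      using less.hyps[of E'] sgE' sub deg' unfolding M_def by auto
    then show ?thesis using lt by simp
  qed
qed




lemma CS2:
  fixes f g :: "'a \<Rightarrow> 'a \<Rightarrow> real"
  shows "(\<Sum>x\<in>A. \<Sum>y\<in>A. f x y * g x y)^2 \<le> (\<Sum>x\<in>A. \<Sum>y\<in>A. (f x y)^2) * (\<Sum>x\<in>A. \<Sum>y\<in>A. (g x y)^2)"
proof -
  have "(\<Sum>p\<in>A\<times>A. f (fst p) (snd p) * g (fst p) (snd p))^2 \<le> (\<Sum>p\<in>A\<times>A. (f (fst p) (snd p))^2) * (\<Sum>p\<in>A\<times>A. (g (fst p) (snd p))^2)"
    by (rule Cauchy_Schwarz_ineq_sum)
  then show ?thesis by (simp add: sum.cartesian_product case_prod_beta)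
qed

lemma CS1:
  fixes s :: "nat \<Rightarrow> real"
  shows "(\<Sum>i<k. s i)^2 \<le> real k * (\<Sum>i<k. (s i)^2)"
  using Cauchy_Schwarz_ineq_sum[of "\<lambda>_. 1" s "{..<k}"] by simp

lemma group_sum:
  fixes g :: "'a \<Rightarrow> real" and c :: "'a \<Rightarrow> nat"
  assumes "finite V" "\<forall>x\<in>V. c x < k"
  shows "(\<Sum>x\<in>V. g x) = (\<Sum>i<k. \<Sum>x\<in>{x\<in>V. c x = i}. g x)"
proof -
  have "c ` V \<subseteq> {..<k}" using assms by auto
  from sum.group[OF assms(1) finite_lessThan this, of g] show ?thesis by simp
qed

lemma sum_ind: "finite A \<Longrightarrow> (\<Sum>y\<in>A. if P y then (1::real) else 0) = real (card {y\<in>A. P y})"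
  by (simp add: sum.inter_filter[symmetric])




lemma multi:
  fixes V :: "'a set" and c :: "'a \<Rightarrow> nat" and k m :: nat
  defines "K \<equiv> (\<lambda>x y. x \<in> V \<and> y \<in> V \<and> c x \<noteq> c y)"
  assumes fin: "finite V" and col: "\<forall>x\<in>V. c x < k" and nkm: "card V = k*m" and k2: "k \<ge> 2"
    and dpos: "\<forall>x\<in>V. deg V K x \<ge> 1" and ne: "\<forall>i<k. \<exists>x\<in>V. c x = i" and Vne: "V \<noteq> {}"
  shows "FF V K \<le> sqrt (2 * real (card V)^2 * (real (card V - m) - 1))
    \<and> (FF V K = sqrt (2 * real (card V)^2 * (real (card V - m) - 1)) \<longrightarrow> (\<forall>i<k. card {x\<in>V. c x = i} = m))"
proof -
  define n where "n = real (card V)"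
  define mr where "mr = real m"
  define kr where "kr = real k"
  have "card V \<noteq> 0" using fin Vne by simp
  then have "m \<noteq> 0" using nkm by auto
  then have m1: "m \<ge> 1" by simp
  have n_eq: "n = kr * mr" unfolding n_def kr_def mr_def using nkm by simp
  define d where "d = n - mr"
  have d_eq: "real (card V - m) = d" unfolding d_def n_def mr_def using nkm k2
    by (simp add: of_nat_diff)
  define D where "D x = real (deg V K x)" for x
  define w where "w x y = (if c x \<noteq> c y then 1 else 0 :: real)" for x y
  define A where "A i = real (card {x\<in>V. c x = i})" for i
  have degK: "deg V K x = card {y\<in>V. c x \<noteq> c y}" if "x \<in> V" for x
    unfolding deg_def K_def using that by simp
  have Dsum: "D x = (\<Sum>y\<in>V. w x y)" if "x \<in> V" for x
    unfolding D_def w_def degK[OF that] using sum_ind[OF fin] by simp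
  have Dge: "D x \<ge> 1" if "x \<in> V" for x using dpos that unfolding D_def by simp
  have Dpos: "D x > 0" if "x \<in> V" for x using Dge[OF that] by linarith
  have Dxy: "D x * D y \<ge> 0" if "x \<in> V" "y \<in> V" for x y using Dpos[OF that(1)] Dpos[OF that(2)] by simp
  have DA: "D x = n - A (c x)" if "x \<in> V" for x
  proof -
    have "A (c x) = (\<Sum>y\<in>V. if c y = c x then 1 else 0)" unfolding A_def using sum_ind[OF fin] by simp
    moreover have "(\<Sum>y\<in>V. w x y) + (\<Sum>y\<in>V. if c y = c x then 1 else 0) = n"
    proof -
      have "\<And>y. w x y + (if c y = c x then 1 else 0) = (1::real)" unfolding w_def by auto
      then have "(\<Sum>y\<in>V. w x y + (if c y = c x then 1 else 0)) = (\<Sum>y\<in>V. (1::real))" by simp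
      then show ?thesis unfolding n_def sum.distrib by simp
    qed
    ultimately show ?thesis using Dsum[OF that] by simp
  qed
  define Pn where "Pn = (\<Sum>x\<in>V. D x)"
  have PnW: "(\<Sum>x\<in>V. \<Sum>y\<in>V. w x y) = Pn" unfolding Pn_def using Dsum by simp
  define H where "H x y = hh (deg V K x) (deg V K y)" for x y
  have FFK: "FF V K = (\<Sum>x\<in>V. \<Sum>y\<in>V. w x y * H x y)"
    unfolding FF_def H_def w_def K_def by (intro sum.cong refl) auto
  have hh2: "(w x y * H x y)^2 = w x y * (1 / D x) + w x y * (1 / D y) - 2 * (w x y / (D x * D y))"
    if "x \<in> V" "y \<in> V" for x y
  proof (cases "c x \<noteq> c y")
    case True
    have p: "D x \<ge> 1" "D y \<ge> 1" using Dge that by auto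
    have "(H x y)^2 = (D x + D y - 2) / (D x * D y)"
      unfolding H_def hh_def D_def[symmetric] using p by (simp add: real_sqrt_pow2)
    also have "\<dots> = 1 / D x + 1 / D y - 2 * ((1 / D x) * (1 / D y))"
      using p by (intro R3_aux[symmetric]) auto
    finally show ?thesis using True unfolding w_def by simp
  next
    case False then show ?thesis unfolding w_def by simp
  qed
  define R where "R = (\<Sum>x\<in>V. \<Sum>y\<in>V. w x y / (D x * D y))"
  have wsym: "w x y = w y x" for x y unfolding w_def by auto
  have half1: "(\<Sum>x\<in>V. \<Sum>y\<in>V. w x y * (1 / D x)) = n"
  proof -
    have "(\<Sum>y\<in>V. w x y * (1 / D x)) = 1" if "x \<in> V" for x
    proof -
      have "(\<Sum>y\<in>V. w x y * (1 / D x)) = (\<Sum>y\<in>V. w x y) * (1 / D x)"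
        by (rule sum_distrib_right[symmetric])
      also have "\<dots> = D x * (1 / D x)" using Dsum[OF that] by simp
      also have "\<dots> = 1" using Dge[OF that] by simp
      finally show ?thesis .
    qed
    then have "(\<Sum>x\<in>V. \<Sum>y\<in>V. w x y * (1 / D x)) = (\<Sum>x\<in>V. 1)" by simp
    then show ?thesis unfolding n_def by simp
  qed
  have half2: "(\<Sum>x\<in>V. \<Sum>y\<in>V. w x y * (1 / D y)) = n"
    using half1 by (subst sum.swap) (simp add: wsym)
  define X where "X = (\<Sum>x\<in>V. \<Sum>y\<in>V. (w x y * H x y)^2)"
  have X_eq: "X = 2*n - 2*R"
  proof -
    have "X = (\<Sum>x\<in>V. \<Sum>y\<in>V. w x y * (1 / D x) + w x y * (1 / D y) - 2 * (w x y / (D x * D y)))"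
      unfolding X_def using hh2 by (intro sum.cong refl) auto
    also have "\<dots> = (\<Sum>x\<in>V. \<Sum>y\<in>V. w x y * (1 / D x)) + (\<Sum>x\<in>V. \<Sum>y\<in>V. w x y * (1 / D y))
        - 2 * R"
      unfolding R_def by (simp add: sum.distrib sum_subtractf sum_distrib_left)
    finally show ?thesis using half1 half2 by simp
  qed
  have X0: "X \<ge> 0" unfolding X_def by (intro sum_nonneg) auto
  have ww: "w x y * w x y = w x y" for x y unfolding w_def by simp
  have CSa: "(FF V K)^2 \<le> Pn * X"
  proof -
    have "(\<Sum>x\<in>V. \<Sum>y\<in>V. w x y * (w x y * H x y))^2
        \<le> (\<Sum>x\<in>V. \<Sum>y\<in>V. (w x y)^2) * (\<Sum>x\<in>V. \<Sum>y\<in>V. (w x y * H x y)^2)"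
      by (rule CS2)
    moreover have "(\<Sum>x\<in>V. \<Sum>y\<in>V. w x y * (w x y * H x y)) = FF V K"
      unfolding FFK by (simp add: mult.assoc[symmetric] ww)
    moreover have "(\<Sum>x\<in>V. \<Sum>y\<in>V. (w x y)^2) = Pn"
      using PnW by (simp add: power2_eq_square ww)
    ultimately show ?thesis unfolding X_def by simp
  qed
  define Z where "Z = (\<Sum>x\<in>V. \<Sum>y\<in>V. w x y * (D x * D y))"
  have CSb: "Pn^2 \<le> Z * R"
  proof -
    have "(\<Sum>x\<in>V. \<Sum>y\<in>V. (w x y * sqrt (D x * D y)) * (w x y / sqrt (D x * D y)))^2
        \<le> (\<Sum>x\<in>V. \<Sum>y\<in>V. (w x y * sqrt (D x * D y))^2) * (\<Sum>x\<in>V. \<Sum>y\<in>V. (w x y / sqrt (D x * D y))^2)"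
      by (rule CS2)
    moreover have "(\<Sum>x\<in>V. \<Sum>y\<in>V. (w x y * sqrt (D x * D y)) * (w x y / sqrt (D x * D y))) = Pn"
    proof -
      have "(w x y * sqrt (D x * D y)) * (w x y / sqrt (D x * D y)) = w x y" if "x \<in> V" "y \<in> V" for x y
      proof -
        have pos: "D x > 0" "D y > 0" using Dge[OF that(1)] Dge[OF that(2)] by linarith+
        then have "sqrt (D x * D y) > 0" by simp
        then show ?thesis using pos unfolding w_def by simp
      qed
      then show ?thesis using PnW by simp
    qed
    moreover have "(\<Sum>x\<in>V. \<Sum>y\<in>V. (w x y * sqrt (D x * D y))^2) = Z"
      unfolding Z_def using Dxy by (intro sum.cong refl) (simp add: power_mult_distrib power2_eq_square[of "w _ _"] ww)
    moreover have "(\<Sum>x\<in>V. \<Sum>y\<in>V. (w x y / sqrt (D x * D y))^2) = R"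
      unfolding R_def using Dxy by (intro sum.cong refl) (simp add: power_divide power2_eq_square[of "w _ _"] ww)
    ultimately show ?thesis by simp
  qed
  define s where "s i = (\<Sum>x\<in>{x\<in>V. c x = i}. D x)" for i
  have sumS: "(\<Sum>i<k. s i) = Pn" unfolding s_def Pn_def using group_sum[OF fin col] by simp
  have same: "(\<Sum>x\<in>V. \<Sum>y\<in>V. (1 - w x y) * (D x * D y)) = (\<Sum>i<k. (s i)^2)"
  proof -
    have row: "(\<Sum>y\<in>V. (1 - w x y) * (D x * D y)) = D x * s (c x)" for x
    proof -
      have "(\<Sum>y\<in>V. (1 - w x y) * (D x * D y)) = (\<Sum>y\<in>V. D x * (if c y = c x then D y else 0))"
        unfolding w_def by (intro sum.cong refl) auto
      also have "\<dots> = D x * (\<Sum>y\<in>V. if c y = c x then D y else 0)" by (simp add: sum_distrib_left)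
      also have "(\<Sum>y\<in>V. if c y = c x then D y else 0) = s (c x)"
        unfolding s_def by (rule sum.inter_filter[OF fin, symmetric])
      finally show ?thesis .
    qed
    have "(\<Sum>x\<in>V. D x * s (c x)) = (\<Sum>i<k. \<Sum>x\<in>{x\<in>V. c x = i}. D x * s (c x))"
      by (rule group_sum[OF fin col])
    also have "\<dots> = (\<Sum>i<k. \<Sum>x\<in>{x\<in>V. c x = i}. D x * s i)"
      by (intro sum.cong refl) auto
    also have "\<dots> = (\<Sum>i<k. (s i)^2)"
      unfolding s_def by (simp add: sum_distrib_right[symmetric] power2_eq_square)
    finally show ?thesis using row by simp
  qed
  have allP: "(\<Sum>x\<in>V. \<Sum>y\<in>V. D x * D y) = Pn^2"
    unfolding Pn_def by (simp add: power2_eq_square sum_product)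
  have Zeq: "Z = Pn^2 - (\<Sum>i<k. (s i)^2)"
  proof -
    have "Z = (\<Sum>x\<in>V. \<Sum>y\<in>V. D x * D y - (1 - w x y) * (D x * D y))"
      unfolding Z_def by (intro sum.cong refl) (simp add: algebra_simps)
    also have "\<dots> = (\<Sum>x\<in>V. \<Sum>y\<in>V. D x * D y) - (\<Sum>x\<in>V. \<Sum>y\<in>V. (1 - w x y) * (D x * D y))"
      by (simp add: sum_subtractf)
    finally show ?thesis using same allP by simp
  qed
  have CSc: "Pn^2 \<le> kr * (\<Sum>i<k. (s i)^2)" using CS1[of s k] sumS unfolding kr_def by simp
  have Pn_ge: "Pn \<ge> n"
  proof -
    have "(\<Sum>x\<in>V. (1::real)) \<le> Pn" unfolding Pn_def using Dge by (intro sum_mono) auto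
    then show ?thesis unfolding n_def by simp
  qed
  have n1: "n \<ge> 1" unfolding n_def using \<open>card V \<noteq> 0\<close> by simp
  have Pn0: "Pn > 0" using Pn_ge n1 by simp
  have R0: "R \<ge> 0" unfolding R_def using Dxy unfolding w_def by (intro sum_nonneg) auto
  have kr2: "kr \<ge> 2" unfolding kr_def using k2 by simp
  have Rk: "kr \<le> (kr - 1) * R"
  proof -
    have "kr * Pn^2 \<le> kr * (Z * R)" using CSb kr2 by simp
    also have "\<dots> = (kr * Pn^2 - kr * (\<Sum>i<k. (s i)^2)) * R" unfolding Zeq by (simp add: algebra_simps)
    also have "\<dots> \<le> (kr * Pn^2 - Pn^2) * R" using CSc R0 by (intro mult_right_mono) auto
    finally have "kr * Pn^2 \<le> ((kr - 1) * R) * Pn^2" by (simp add: algebra_simps)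
    then show ?thesis using Pn0 by simp
  qed
  have sumA: "(\<Sum>i<k. A i) = n"
  proof -
    have "(\<Sum>x\<in>V. (1::real)) = (\<Sum>i<k. \<Sum>x\<in>{x\<in>V. c x = i}. 1)" by (rule group_sum[OF fin col])
    then show ?thesis unfolding A_def n_def by simp
  qed
  have PnA: "Pn = n*n - (\<Sum>i<k. (A i)^2)"
  proof -
    have "Pn = (\<Sum>x\<in>V. n - A (c x))" unfolding Pn_def using DA by simp
    also have "\<dots> = n*n - (\<Sum>x\<in>V. A (c x))" by (simp add: sum_subtractf n_def)
    also have "(\<Sum>x\<in>V. A (c x)) = (\<Sum>i<k. \<Sum>x\<in>{x\<in>V. c x = i}. A (c x))" by (rule group_sum[OF fin col])
    also have "\<dots> = (\<Sum>i<k. \<Sum>x\<in>{x\<in>V. c x = i}. A i)" by (intro sum.cong refl) auto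
    also have "\<dots> = (\<Sum>i<k. (A i)^2)" by (simp add: A_def power2_eq_square)
    finally show ?thesis .
  qed
  define Q where "Q = (\<Sum>i<k. (A i - mr)^2)"
  have Q0: "Q \<ge> 0" unfolding Q_def by (intro sum_nonneg) auto
  have Qeq: "Q = (\<Sum>i<k. (A i)^2) - 2*mr*n + kr*mr^2"
  proof -
    have "Q = (\<Sum>i<k. (A i)^2 - 2*mr*A i + mr^2)" unfolding Q_def by (intro sum.cong refl) (simp add: power2_diff algebra_simps)
    also have "\<dots> = (\<Sum>i<k. (A i)^2) - 2*mr*(\<Sum>i<k. A i) + kr*mr^2"
      unfolding kr_def by (simp add: sum.distrib sum_subtractf sum_distrib_left)
    finally show ?thesis using sumA by simp
  qed
  have Pnd: "Pn = n*d - Q" unfolding PnA Qeq d_def n_eq by (simp add: algebra_simps power2_eq_square)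
  have Xeq: "X = 2*n - 2*R" by (rule X_eq)
  have Rd: "R * d \<ge> n"
  proof -
    have "d = mr * (kr - 1)" unfolding d_def n_eq by (simp add: algebra_simps)
    then have "R * d = mr * ((kr - 1) * R)" by simp
    also have "\<dots> \<ge> mr * kr" using Rk by (intro mult_left_mono) (auto simp: mr_def)
    finally show ?thesis using n_eq by (simp add: mult.commute)
  qed
  have d1: "d \<ge> 1"
  proof -
    have "d = mr * (kr - 1)" unfolding d_def n_eq by (simp add: algebra_simps)
    moreover have "mr \<ge> 1" using m1 unfolding mr_def by simp
    moreover have "kr - 1 \<ge> 1" using kr2 by simp
    ultimately show ?thesis by (metis mult_mono' one_le_mult_iff mult_1_right order_trans zero_le_one)
  qed
  have Hnn: "H x y \<ge> 0" if "x \<in> V" "y \<in> V" for x y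
    unfolding H_def hh_def D_def[symmetric] using Dge[OF that(1)] Dge[OF that(2)]
    by (intro real_sqrt_ge_zero divide_nonneg_nonneg) auto
  have FF0: "FF V K \<ge> 0" unfolding FFK using Hnn unfolding w_def by (intro sum_nonneg) auto
  have bound: "(FF V K)^2 \<le> 2 * n^2 * (d - 1)"
  proof -
    have "(FF V K)^2 \<le> Pn * X" by (rule CSa)
    also have "\<dots> \<le> (n*d) * X" using Pnd Q0 X0 by (intro mult_right_mono) auto
    also have "\<dots> = 2*n*(n*d - R*d)" unfolding Xeq by (simp add: algebra_simps)
    also have "\<dots> \<le> 2*n*(n*d - n)" using Rd n1 by (intro mult_left_mono) auto
    also have "\<dots> = 2 * n^2 * (d - 1)" by (simp add: algebra_simps power2_eq_square)
    finally show ?thesis .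
  qed
  have tgt: "sqrt (2 * real (card V)^2 * (real (card V - m) - 1)) = sqrt (2 * n^2 * (d - 1))"
    unfolding d_eq n_def by simp
  have ndX: "(n*d) * X \<le> 2 * n^2 * (d - 1)"
  proof -
    have "(n*d) * X = 2*n*(n*d - R*d)" unfolding Xeq by (simp add: algebra_simps)
    also have "\<dots> \<le> 2*n*(n*d - n)" using Rd n1 by (intro mult_left_mono) auto
    also have "\<dots> = 2 * n^2 * (d - 1)" by (simp add: algebra_simps power2_eq_square)
    finally show ?thesis .
  qed
  have Bnn: "2 * n^2 * (d - 1) \<ge> 0" using d1 by simp
  show ?thesis
  proof (intro conjI impI)
    show "FF V K \<le> sqrt (2 * real (card V)^2 * (real (card V - m) - 1))"
      unfolding tgt using bound by (rule real_le_rsqrt)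
  next
    assume eq: "FF V K = sqrt (2 * real (card V)^2 * (real (card V - m) - 1))"
    have FFsq: "(FF V K)^2 = 2 * n^2 * (d - 1)" unfolding eq tgt using Bnn by simp
    show "\<forall>i<k. card {x\<in>V. c x = i} = m"
    proof (cases "m = 1")
      case True
      have Ai: "A i \<ge> 1" if ik: "i < k" for i
      proof -
        obtain x where "x \<in> V" "c x = i" using ne ik by blast
        then have "{x\<in>V. c x = i} \<noteq> {}" by auto
        then have "card {x\<in>V. c x = i} \<ge> 1" using fin by (simp add: Suc_le_eq card_gt_0_iff)
        then show ?thesis unfolding A_def by simp
      qed
      have "(\<Sum>i<k. A i - 1) = 0"
        using sumA n_eq True unfolding mr_def kr_def by (simp add: sum_subtractf)
      moreover have "\<forall>i\<in>{..<k}. A i - 1 \<ge> 0" using Ai by auto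
      ultimately have "\<forall>i\<in>{..<k}. A i - 1 = 0" using sum_nonneg_eq_0_iff[of "{..<k}" "\<lambda>i. A i - 1"] by auto
      then show ?thesis using True unfolding A_def by auto
    next
      case False
      then have m2: "mr \<ge> 2" using m1 unfolding mr_def by simp
      have dd: "d = mr * (kr - 1)" unfolding d_def n_eq by (simp add: algebra_simps)
      have "mr * (kr - 1) \<ge> 2 * 1" using m2 kr2 by (intro mult_mono) auto
      then have "d \<ge> 2" unfolding dd by simp
      then have Bpos: "2 * n^2 * (d - 1) > 0" using n1 by simp
      have le: "2 * n^2 * (d - 1) \<le> Pn * X" using CSa FFsq by simp
      have Xpos: "X > 0"
      proof (rule ccontr)
        assume "\<not> X > 0" then have "X = 0" using X0 by simp
        then show False using le Bpos by simp
      qed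
      have "2 * n^2 * (d - 1) \<le> (n*d)*X - Q*X" using le unfolding Pnd by (simp add: algebra_simps)
      then have "Q * X \<le> 0" using ndX by simp
      then have "Q \<le> 0" using Xpos by (simp add: mult_le_0_iff)
      then have "Q = 0" using Q0 by simp
      then have "\<forall>i\<in>{..<k}. (A i - mr)^2 = 0"
        unfolding Q_def by (subst sum_nonneg_eq_0_iff[symmetric]) auto
      then show ?thesis unfolding A_def mr_def by auto
    qed
  qed
qed




lemma turan_class_card:
  assumes "i < k"
  shows "card {j\<in>{0..<k*m}. j mod k = i} = m"
proof -
  have "{j\<in>{0..<k*m}. j mod k = i} = (\<lambda>t. i + k*t) ` {0..<m}"
  proof (intro set_eqI iffI)
    fix j assume "j \<in> {j\<in>{0..<k*m}. j mod k = i}"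
    then have j: "j < k*m" "j mod k = i" by auto
    have "j = i + k*(j div k)" using j(2) by (metis mod_mult_div_eq add.commute)
    moreover have "j div k < m" using j(1) by (metis less_mult_imp_div_less mult.commute)
    ultimately show "j \<in> (\<lambda>t. i + k*t) ` {0..<m}" by auto
  next
    fix j assume "j \<in> (\<lambda>t. i + k*t) ` {0..<m}"
    then obtain t where t: "t < m" "j = i + k*t" by auto
    have "i + k*t < k + k*t" using assms by simp
    also have "\<dots> = k*(t+1)" by simp
    also have "\<dots> \<le> k*m" using t by (intro mult_le_mono2) simp
    finally have "j < k*m" using t by simp
    moreover have "j mod k = i" using t assms by simp
    ultimately show "j \<in> {j\<in>{0..<k*m}. j mod k = i}" by simp
  qed
  moreover have "inj_on (\<lambda>t. i + k*t) {0..<m}" using assms by (intro inj_onI) simp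
  ultimately show ?thesis by (simp add: card_image)
qed

lemma turan_simple: "simple_graph (turan_V n) (turan_E n k)"
  unfolding simple_graph_def turan_V_def turan_E_def by auto

lemma turan_deg:
  assumes "0 < k" "x < k*m"
  shows "deg (turan_V (k*m)) (turan_E (k*m) k) x = k*m - m"
proof -
  have "{u\<in>turan_V (k*m). turan_E (k*m) k x u} = {0..<k*m} - {j\<in>{0..<k*m}. j mod k = x mod k}"
    unfolding turan_V_def turan_E_def using assms by auto
  moreover have "card {j\<in>{0..<k*m}. j mod k = x mod k} = m"
    using assms by (intro turan_class_card) simp
  moreover have "{j\<in>{0..<k*m}. j mod k = x mod k} \<subseteq> {0..<k*m}" by auto
  moreover have "finite {j\<in>{0..<k*m}. j mod k = x mod k}" by simp
  ultimately show ?thesis unfolding deg_def by (simp only: card_Diff_subset card_atLeastLessThan)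
qed

lemma turan_FF:
  assumes k: "0 < k" and m: "m \<ge> 1" and km: "k*m - m \<ge> 1"
  shows "FF (turan_V (k*m)) (turan_E (k*m) k) = sqrt (2 * real (k*m)^2 * (real (k*m - m) - 1))"
proof -
  define n where "n = k*m"
  define d where "d = k*m - m"
  have "FF (turan_V n) (turan_E n k) = (\<Sum>x\<in>{0..<n}. \<Sum>y\<in>{0..<n}. if turan_E n k x y then hh d d else 0)"
    unfolding FF_def turan_V_def n_def d_def using turan_deg[OF k, of _ m] by (intro sum.cong refl) (auto simp: turan_V_def)
  also have "\<dots> = (\<Sum>x\<in>{0..<n}. real d * hh d d)"
  proof (intro sum.cong refl)
    fix x assume x: "x \<in> {0..<n}"
    have "(\<Sum>y\<in>{0..<n}. if turan_E n k x y then hh d d else 0) = real (card {y\<in>{0..<n}. turan_E n k x y}) * hh d d"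
      using sum.inter_filter[of "{0..<n}" "\<lambda>_. hh d d" "turan_E n k x"] by simp
    also have "card {y\<in>{0..<n}. turan_E n k x y} = d"
      using turan_deg[OF k, of x m] x unfolding deg_def turan_V_def n_def d_def by simp
    finally show "(\<Sum>y\<in>{0..<n}. if turan_E n k x y then hh d d else 0) = real d * hh d d" .
  qed
  also have "\<dots> = real n * real d * hh d d" by simp
  also have "\<dots> = sqrt (2 * real n^2 * (real d - 1))"
  proof -
    have d1: "real d \<ge> 1" using km unfolding d_def by simp
    define Y where "Y = (real d + real d - 2) / (real d * real d)"
    have "real n * real d * hh d d = sqrt ((real n * real d)^2 * Y)"
      unfolding hh_def Y_def[symmetric] by (simp only: real_sqrt_mult real_sqrt_abs) simp
    also have "(real n * real d)^2 * Y = 2 * real n^2 * (real d - 1)"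
      unfolding Y_def
      using d1 by (simp add: field_simps power2_eq_square)
    finally show ?thesis .
  qed
  finally show ?thesis unfolding n_def d_def .
qed

lemma FF_iso:
  assumes sg: "simple_graph V E" and bij: "bij_betw f V V'"
    and iso: "\<forall>u\<in>V. \<forall>v\<in>V. E u v \<longleftrightarrow> E' (f u) (f v)"
    and inV': "\<And>x y. E' x y \<Longrightarrow> x \<in> V' \<and> y \<in> V'"
  shows "FF V E = FF V' E'"
proof -
  have fin: "finite V" using sg unfolding simple_graph_def by auto
  have inj: "inj_on f V" and img: "f ` V = V'" using bij unfolding bij_betw_def by auto
  have degs: "deg V' E' (f u) = deg V E u" if u: "u \<in> V" for u
  proof -
    have "{w\<in>V'. E' (f u) w} = f ` {w\<in>V. E u w}"
    proof (intro set_eqI iffI)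
      fix w assume "w \<in> {w\<in>V'. E' (f u) w}"
      then obtain w0 where "w0 \<in> V" "w = f w0" "E' (f u) (f w0)" using img by auto
      then show "w \<in> f ` {w\<in>V. E u w}" using iso u by auto
    next
      fix w assume "w \<in> f ` {w\<in>V. E u w}"
      then obtain w0 where "w0 \<in> V" "w = f w0" "E u w0" by auto
      then show "w \<in> {w\<in>V'. E' (f u) w}" using iso u img by auto
    qed
    moreover have "inj_on f {w\<in>V. E u w}" using inj by (rule inj_on_subset) auto
    ultimately show ?thesis unfolding deg_def by (simp add: card_image)
  qed
  have "FF V' E' = (\<Sum>x\<in>V. \<Sum>y\<in>V. if E' (f x) (f y) then hh (deg V' E' (f x)) (deg V' E' (f y)) else 0)"
    unfolding FF_def
    by (subst sum.reindex_bij_betw[OF bij, symmetric], intro sum.cong refl, subst sum.reindex_bij_betw[OF bij, symmetric]) simp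
  also have "\<dots> = FF V E" unfolding FF_def using iso degs by (intro sum.cong refl) auto
  finally show ?thesis by simp
qed




theorem theorem5:
  fixes V :: "'a set" and E :: "'a \<Rightarrow> 'a \<Rightarrow> bool"
  assumes "simple_graph V E"
    and "connected_graph V E"
    and "chromatic_number V E \<ge> 2"
    and "chromatic_number V E dvd card V"
  shows "ABC V E \<le> ABC (turan_V (card V)) (turan_E (card V) (chromatic_number V E))
    \<and> (ABC V E = ABC (turan_V (card V)) (turan_E (card V) (chromatic_number V E))
         \<longleftrightarrow> graph_iso V E (turan_V (card V)) (turan_E (card V) (chromatic_number V E)))"
proof -
  note sg = assms(1)
  define k where "k = chromatic_number V E"
  have fin: "finite V" and sym: "\<And>x y. E x y \<Longrightarrow> E y x" and irr: "\<And>x. \<not> E x x"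
    and inV: "\<And>x y. E x y \<Longrightarrow> x \<in> V \<and> y \<in> V"
    using sg unfolding simple_graph_def by auto
  have Vne: "V \<noteq> {}" using assms(2) unfolding connected_graph_def by auto
  have k2: "k \<ge> 2" using assms(3) unfolding k_def by simp
  have colN: "colorable V E (card V)"
  proof -
    obtain h where h: "bij_betw h V {0..<card V}" using ex_bij_betw_finite_nat[OF fin] by blast
    have "\<forall>v\<in>V. h v < card V" using h unfolding bij_betw_def by auto
    moreover have "\<forall>u\<in>V. \<forall>v\<in>V. E u v \<longrightarrow> h u \<noteq> h v"
      using h irr unfolding bij_betw_def inj_on_def by metis
    ultimately show ?thesis unfolding colorable_def by blast
  qed
  have "colorable V E k" unfolding k_def chromatic_number_def by (rule LeastI[of "colorable V E", OF colN])
  then obtain c where col: "\<forall>v\<in>V. c v < k" and cprop: "\<forall>u\<in>V. \<forall>v\<in>V. E u v \<longrightarrow> c u \<noteq> c v"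
    unfolding colorable_def by blast
  have notcol: "\<not> colorable V E j" if "j < k" for j
    using that unfolding k_def chromatic_number_def by (rule not_less_Least)
  have ne: "\<forall>i<k. \<exists>x\<in>V. c x = i"
  proof (rule ccontr)
    assume "\<not> (\<forall>i<k. \<exists>x\<in>V. c x = i)"
    then obtain i where i: "i < k" "\<forall>x\<in>V. c x \<noteq> i" by auto
    define c' where "c' v = (if c v > i then c v - 1 else c v)" for v
    have "\<forall>v\<in>V. c' v < k - 1"
    proof
      fix v assume v: "v \<in> V"
      then have "c v < k" "c v \<noteq> i" using col i by auto
      then show "c' v < k - 1" unfolding c'_def using i by auto
    qed
    moreover have "\<forall>u\<in>V. \<forall>v\<in>V. E u v \<longrightarrow> c' u \<noteq> c' v"
    proof (intro ballI impI)
      fix u v assume uv: "u \<in> V" "v \<in> V" "E u v"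
      then have "c u \<noteq> c v" "c u \<noteq> i" "c v \<noteq> i" using cprop i by auto
      then show "c' u \<noteq> c' v" unfolding c'_def by auto
    qed
    ultimately have "colorable V E (k - 1)" unfolding colorable_def by blast
    moreover have "k - 1 < k" using k2 by simp
    ultimately show False using notcol by blast
  qed
  have "\<exists>u\<in>V. \<exists>v\<in>V. E u v"
  proof (rule ccontr)
    assume "\<not> (\<exists>u\<in>V. \<exists>v\<in>V. E u v)"
    then have "colorable V E 1" unfolding colorable_def by (intro exI[of _ "\<lambda>_. 0"]) auto
    then show False using notcol k2 by simp
  qed
  then obtain u0 v0 where e0: "u0 \<in> V" "v0 \<in> V" "E u0 v0" by blast
  have degE: "\<forall>x\<in>V. deg V E x \<ge> 1"
  proof
    fix x assume x: "x \<in> V"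
    have "\<exists>y. E x y"
    proof (cases "x = u0")
      case True then show ?thesis using e0 by auto
    next
      case False
      have "(\<lambda>x y. x \<in> V \<and> y \<in> V \<and> E x y)\<^sup>*\<^sup>* x u0" using assms(2) x e0 unfolding connected_graph_def by auto
      then show ?thesis using False by (cases rule: converse_rtranclpE) auto
    qed
    then obtain y where "E x y" by blast
    then have "y \<in> {w\<in>V. E x w}" using inV by auto
    then have "{w\<in>V. E x w} \<noteq> {}" by auto
    then show "deg V E x \<ge> 1" unfolding deg_def using fin by (simp add: Suc_le_eq card_gt_0_iff)
  qed
  obtain m where nkm: "card V = k*m" using assms(4) unfolding k_def by (auto elim: dvdE)
  have m1: "m \<ge> 1" using nkm Vne fin by (cases m) auto
  define K where "K = (\<lambda>x y. x \<in> V \<and> y \<in> V \<and> c x \<noteq> c y)"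
  have sgK: "simple_graph V K" unfolding simple_graph_def K_def using fin by auto
  have EK: "\<forall>x y. E x y \<longrightarrow> K x y" unfolding K_def using cprop inV by auto
  have mono: "FF V E \<le> FF V K \<and> (FF V E = FF V K \<longrightarrow> E = K)"
    using mono_FF[OF sgK sg EK degE] .
  have degK: "\<forall>x\<in>V. deg V K x \<ge> 1"
    using degE fin EK by (metis deg_mono order_trans)
  define B where "B = sqrt (2 * real (card V)^2 * (real (card V - m) - 1))"
  have mul: "FF V K \<le> B \<and> (FF V K = B \<longrightarrow> (\<forall>i<k. card {x\<in>V. c x = i} = m))"
    unfolding B_def K_def using multi[OF fin col nkm k2 _ ne Vne] degK unfolding K_def by blast
  have kmm: "k*m - m \<ge> 1"
  proof -
    have "k*m - m = (k - 1)*m" by (simp add: diff_mult_distrib)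
    moreover have "(k-1)*m \<ge> 1*1" using k2 m1 by (intro mult_le_mono) auto
    ultimately show ?thesis by simp
  qed
  have TF: "FF (turan_V (card V)) (turan_E (card V) k) = B"
    unfolding B_def nkm using turan_FF[of k m] k2 m1 kmm by simp
  have ABCE: "ABC V E = FF V E / 2" by (rule ABC_FF[OF sg])
  have ABCT: "ABC (turan_V (card V)) (turan_E (card V) k) = B / 2"
    using ABC_FF[OF turan_simple] TF by simp
  show ?thesis unfolding k_def[symmetric] ABCE ABCT
  proof (intro conjI iffI)
    show "FF V E / 2 \<le> B / 2" using mono mul by simp
  next
    assume "FF V E / 2 = B / 2"
    then have eq: "FF V E = B" by simp
    then have "FF V K = B" "FF V E = FF V K" using mono mul by auto
    then have EK': "E = K" and bal: "\<forall>i<k. card {x\<in>V. c x = i} = m" using mono mul by auto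
    define C where "C i = {x\<in>V. c x = i}" for i
    define C' where "C' i = {j\<in>{0..<k*m}. j mod k = i}" for i
    have "\<forall>i. \<exists>g. i < k \<longrightarrow> bij_betw g (C i) (C' i)"
    proof
      fix i show "\<exists>g. i < k \<longrightarrow> bij_betw g (C i) (C' i)"
      proof (cases "i < k")
        case True
        have "card (C i) = card (C' i)" unfolding C_def C'_def using bal True turan_class_card[OF True] by simp
        then obtain g where "bij_betw g (C i) (C' i)"
          using finite_same_card_bij[of "C i" "C' i"] fin unfolding C_def C'_def by auto
        then show ?thesis by blast
      qed simp
    qed
    then obtain g where g: "\<And>i. i < k \<Longrightarrow> bij_betw (g i) (C i) (C' i)" by metis
    define f where "f x = g (c x) x" for x
    have fC: "f x \<in> C' (c x)" if "x \<in> V" for x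
      using g[of "c x"] col that unfolding f_def C_def bij_betw_def by auto
    have fmod: "f x mod k = c x" and flt: "f x < k*m" if "x \<in> V" for x
      using fC[OF that] unfolding C'_def by auto
    have bijf: "bij_betw f V {0..<card V}"
      unfolding bij_betw_def
    proof
      show "inj_on f V"
      proof (rule inj_onI)
        fix x y assume xy: "x \<in> V" "y \<in> V" "f x = f y"
        then have cxy: "c x = c y" using fmod by metis
        have "inj_on (g (c x)) (C (c x))" using g[of "c x"] col xy unfolding bij_betw_def by auto
        moreover have "x \<in> C (c x)" "y \<in> C (c x)" using xy cxy unfolding C_def by auto
        moreover have "g (c x) x = g (c x) y" using xy cxy unfolding f_def by simp
        ultimately show "x = y" unfolding inj_on_def by blast
      qed
      show "f ` V = {0..<card V}"
      proof (intro set_eqI iffI)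
        fix j assume "j \<in> f ` V" then show "j \<in> {0..<card V}" using flt nkm by auto
      next
        fix j assume j: "j \<in> {0..<card V}"
        define i where "i = j mod k"
        have ik: "i < k" using k2 unfolding i_def by simp
        have "j \<in> C' i" unfolding C'_def i_def using j nkm by simp
        then have "j \<in> g i ` C i" using g[OF ik] unfolding bij_betw_def by simp
        then obtain x where "x \<in> C i" "g i x = j" by blast
        then show "j \<in> f ` V" unfolding C_def f_def by auto
      qed
    qed
    show "graph_iso V E (turan_V (card V)) (turan_E (card V) k)"
      unfolding graph_iso_def turan_V_def
    proof (intro exI conjI)
      show "bij_betw f V {0..<card V}" by (rule bijf)
      show "\<forall>u\<in>V. \<forall>v\<in>V. E u v \<longleftrightarrow> turan_E (card V) k (f u) (f v)"
        unfolding EK' K_def turan_E_def using fmod flt nkm by auto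
    qed
  next
    assume "graph_iso V E (turan_V (card V)) (turan_E (card V) k)"
    then obtain f where bij: "bij_betw f V (turan_V (card V))"
      and iso: "\<forall>u\<in>V. \<forall>v\<in>V. E u v \<longleftrightarrow> turan_E (card V) k (f u) (f v)"
      unfolding graph_iso_def by blast
    have "FF V E = FF (turan_V (card V)) (turan_E (card V) k)"
      by (rule FF_iso[OF sg bij iso]) (auto simp: turan_V_def turan_E_def)
    then show "FF V E / 2 = B / 2" using TF by simp
  qed
qed


end
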